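(* Let $F:\mathcal{P}(V,A)\to S_2(A)$ be a consular election rule satisfying SPP and SPO, and let $P$ be a profile. If $\{a,b\}$ is the favourite committee of $P_i$ in the range of $F$ for every voter $i\in V$, then $F(P)=\{a,b\}$.
   Context: $V$ is a finite nonempty set of voters, $A$ a finite set of alternatives; a profile $P$ assigns to each voter $i$ a linear order $P_i$ on $A$; $P_i'P_{-i}$ replaces voter $i$'s order by $P_i'$. $S_2(A)$ is the set of 2-element subsets of $A$; a consular election rule is a map $F:\mathcal{P}(V,A)\to S_2(A)$. SPO: for all $P$, $i$, $P_i'$, $\mathrm{best}(P_i,F(P))\succeq_i\mathrm{best}(P_i,F(P_i'P_{-i}))$; SPP: same with $\mathrm{worst}$, where $\mathrm{best}(P_i,W)$, $\mathrm{worst}(P_i,W)$ are the $P_i$-best and $P_i$-worst elements of $W$. For a linear order $L$ on $A$ and $X,Y\in S_2(A)$: $X\succeq^O Y$ iff the $L$-best element of $X$ is weakly $L$-above that of $Y$; $X\succeq^P Y$ iff the $L$-worst element of $X$ is weakly $L$-above that of $Y$. A favourite committee of $L$ in $\mathcal{X}\subseteq S_2(A)$ is an element of $\mathcal{X}$ maximal in $\mathcal{X}$ under both $\succeq^O$ and $\succeq^P$ (for SPO and SPP rules it is unique in the range of $F$). *)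

theory Defs
  imports Main "HOL-Library.FuncSet"
begin

(* Convention: a linear order L on A is a relation with linear_order_on A L;
   (x, y) \<in> L means "x is weakly above (weakly preferred to) y". *)

definition S2 :: "'a set \<Rightarrow> 'a set set" where
  "S2 A = {W. W \<subseteq> A \<and> card W = 2}"

definition profiles :: "'v set \<Rightarrow> 'a set \<Rightarrow> ('v \<Rightarrow> 'a rel) set" where
  "profiles V A = {P. (\<forall>i\<in>V. linear_order_on A (P i)) \<and> (\<forall>i. i \<notin> V \<longrightarrow> P i = undefined)}"

definition consular_rule :: "'v set \<Rightarrow> 'a set \<Rightarrow> (('v \<Rightarrow> 'a rel) \<Rightarrow> 'a set) \<Rightarrow> bool" where
  "consular_rule V A F \<longleftrightarrow> (\<forall>P\<in>profiles V A. F P \<in> S2 A)"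

definition replace :: "('v \<Rightarrow> 'a rel) \<Rightarrow> 'v \<Rightarrow> 'a rel \<Rightarrow> ('v \<Rightarrow> 'a rel)" where
  "replace P i Li = P(i := Li)"

definition best :: "'a rel \<Rightarrow> 'a set \<Rightarrow> 'a" where
  "best L W = (THE x. x \<in> W \<and> (\<forall>y\<in>W. (x, y) \<in> L))"

definition worst :: "'a rel \<Rightarrow> 'a set \<Rightarrow> 'a" where
  "worst L W = (THE x. x \<in> W \<and> (\<forall>y\<in>W. (y, x) \<in> L))"

definition SPO :: "'v set \<Rightarrow> 'a set \<Rightarrow> (('v \<Rightarrow> 'a rel) \<Rightarrow> 'a set) \<Rightarrow> bool" where
  "SPO V A F \<longleftrightarrow> (\<forall>P\<in>profiles V A. \<forall>i\<in>V. \<forall>Li. linear_order_on A Li \<longrightarrow>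
      (best (P i) (F P), best (P i) (F (replace P i Li))) \<in> P i)"

definition SPP :: "'v set \<Rightarrow> 'a set \<Rightarrow> (('v \<Rightarrow> 'a rel) \<Rightarrow> 'a set) \<Rightarrow> bool" where
  "SPP V A F \<longleftrightarrow> (\<forall>P\<in>profiles V A. \<forall>i\<in>V. \<forall>Li. linear_order_on A Li \<longrightarrow>
      (worst (P i) (F P), worst (P i) (F (replace P i Li))) \<in> P i)"

definition geqO :: "'a rel \<Rightarrow> 'a set \<Rightarrow> 'a set \<Rightarrow> bool" where
  "geqO L X Y \<longleftrightarrow> (best L X, best L Y) \<in> L"

definition geqP :: "'a rel \<Rightarrow> 'a set \<Rightarrow> 'a set \<Rightarrow> bool" where
  "geqP L X Y \<longleftrightarrow> (worst L X, worst L Y) \<in> L"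

definition favourite :: "'a rel \<Rightarrow> 'a set set \<Rightarrow> 'a set \<Rightarrow> bool" where
  "favourite L \<X> X \<longleftrightarrow> X \<in> \<X> \<and> (\<forall>Y\<in>\<X>. geqO L X Y \<and> geqP L X Y)"

definition range_rule :: "'v set \<Rightarrow> 'a set \<Rightarrow> (('v \<Rightarrow> 'a rel) \<Rightarrow> 'a set) \<Rightarrow> 'a set set" where
  "range_rule V A F = F ` profiles V A"

end

theory Submission
  imports Defs
begin

lemma bw_pair:
  assumes L: "linear_order_on A L" and "x \<in> A" "y \<in> A" "x \<noteq> y" "(x,y) \<in> L"
  shows "best L {x,y} = x \<and> worst L {x,y} = y"
proof -
  have refl: "refl_on A L" and anti: "antisym L"
    using L by (auto simp: linear_order_on_def partial_order_on_def preorder_on_def)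
  have xx: "(x,x) \<in> L" "(y,y) \<in> L" using refl assms by (auto simp: refl_on_def)
  have yx: "(y,x) \<notin> L" using anti assms by (auto simp: antisym_def)
  have "best L {x,y} = x" unfolding best_def
    by (rule the_equality) (use xx yx assms in auto)
  moreover have "worst L {x,y} = y" unfolding worst_def
    by (rule the_equality) (use xx yx assms in auto)
  ultimately show ?thesis by simp
qed

lemma bw_S2:
  assumes L: "linear_order_on A L" and W: "W \<in> S2 A"
  shows "W = {best L W, worst L W} \<and> best L W \<noteq> worst L W"
proof -
  from W obtain x y where W: "W = {x,y}" "x \<noteq> y" "x \<in> A" "y \<in> A"
    by (auto simp: S2_def card_2_iff)
  have tot: "(x,y) \<in> L \<or> (y,x) \<in> L"
    using L W by (auto simp: linear_order_on_def total_on_def)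
  then show ?thesis
  proof
    assume "(x,y) \<in> L" then show ?thesis using bw_pair[OF L] W by auto
  next
    assume "(y,x) \<in> L" then have "best L {y,x} = y \<and> worst L {y,x} = x"
      using bw_pair[OF L] W by auto
    then show ?thesis using W by (auto simp: insert_commute)
  qed
qed

lemma S2_eq:
  assumes L: "linear_order_on A L" and "W1 \<in> S2 A" "W2 \<in> S2 A"
    and "best L W1 = best L W2" "worst L W1 = worst L W2"
  shows "W1 = W2"
  using bw_S2[OF L assms(2)] bw_S2[OF L assms(3)] assms(4,5) by metis

theorem lemma48:
  fixes V :: "'v set" and A :: "'a set" and F :: "('v \<Rightarrow> 'a rel) \<Rightarrow> 'a set"
    and P :: "'v \<Rightarrow> 'a rel" and a b :: 'a
  assumes "finite V" and "V \<noteq> {}" and "finite A"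
    and "consular_rule V A F"
    and "SPP V A F" and "SPO V A F"
    and "P \<in> profiles V A"
    and "\<forall>i\<in>V. favourite (P i) (range_rule V A F) {a, b}"
  shows "F P = {a, b}"
proof -
  note fav = assms(8)
  have step: "F (R(i := P i)) = {a,b}"
    if R: "R \<in> profiles V A" and FR: "F R = {a,b}" and i: "i \<in> V" for R i
  proof -
    let ?R' = "R(i := P i)"
    let ?L = "P i"
    have Li: "linear_order_on A ?L" using assms(7) i by (auto simp: profiles_def)
    have Ri: "linear_order_on A (R i)" using R i by (auto simp: profiles_def)
    have R': "?R' \<in> profiles V A" using R i Li by (auto simp: profiles_def)
    have bk: "replace ?R' i (R i) = R" by (simp add: replace_def)
    have ho: "(best ?L (F ?R'), best ?L (F R)) \<in> ?L"
      using assms(6) R' i Ri bk unfolding SPO_def by (metis fun_upd_same)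
    have hp: "(worst ?L (F ?R'), worst ?L (F R)) \<in> ?L"
      using assms(5) R' i Ri bk unfolding SPP_def by (metis fun_upd_same)
    have inr: "F ?R' \<in> range_rule V A F" using R' by (simp add: range_rule_def)
    have hf: "geqO ?L {a,b} (F ?R') \<and> geqP ?L {a,b} (F ?R')"
      using fav i inr by (auto simp: favourite_def)
    have anti: "antisym ?L" using Li
      by (auto simp: linear_order_on_def partial_order_on_def)
    have e1: "best ?L (F ?R') = best ?L {a,b}"
      using ho hf anti FR by (auto simp: geqO_def antisym_def)
    have e2: "worst ?L (F ?R') = worst ?L {a,b}"
      using hp hf anti FR by (auto simp: geqP_def antisym_def)
    have s1: "F ?R' \<in> S2 A" using assms(4) R' by (auto simp: consular_rule_def)
    have s2: "{a,b} \<in> S2 A" using assms(4) R FR by (auto simp: consular_rule_def)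
    show ?thesis using S2_eq[OF Li s1 s2 e1 e2] .
  qed
  have main: "\<forall>R. R \<in> profiles V A \<and> F R = {a,b} \<and> (\<forall>i. i \<notin> D \<longrightarrow> R i = P i) \<longrightarrow> F P = {a,b}"
    if "finite D" "D \<subseteq> V" for D
    using that
  proof (induction D rule: finite_induct)
    case empty
    have "\<And>R. (\<forall>i. R i = P i) \<Longrightarrow> R = P" by blast
    then show ?case by auto
  next
    case (insert x D)
    show ?case
    proof (intro allI impI)
      fix R assume H: "R \<in> profiles V A \<and> F R = {a,b} \<and> (\<forall>i. i \<notin> insert x D \<longrightarrow> R i = P i)"
      have xV: "x \<in> V" using insert by auto
      have "R(x := P x) \<in> profiles V A" using H xV assms(7) by (auto simp: profiles_def)
      moreover have "F (R(x := P x)) = {a,b}" using step H xV by blast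
      moreover have "\<forall>i. i \<notin> D \<longrightarrow> (R(x := P x)) i = P i" using H by auto
      ultimately show "F P = {a,b}" using insert by blast
    qed
  qed
  obtain i where i: "i \<in> V" using assms(2) by auto
  have "{a,b} \<in> range_rule V A F" using fav i by (auto simp: favourite_def)
  then obtain Q where Q: "Q \<in> profiles V A" "F Q = {a,b}" by (auto simp: range_rule_def)
  have "\<forall>j. j \<notin> V \<longrightarrow> Q j = P j" using Q assms(7) by (auto simp: profiles_def)
  then show ?thesis using main[OF assms(1) order_refl] Q by blast
qed

end
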